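(* Let $S$ be a $\Gamma$-hemiring. If $\mu$ is a prime fuzzy h-ideal of $S$, then for all $x,y\in S$, $\inf_{s\in S,\ \alpha,\gamma\in\Gamma}\mu(x\alpha s\gamma y)=\max\{\mu(x),\mu(y)\}$. Conversely, if $\mu$ is a fuzzy h-ideal of $S$ with $\operatorname{Im}\mu=\{1,t\}$ for some $t\in[0,1)$ such that $\inf_{s\in S,\ \alpha,\gamma\in\Gamma}\mu(x\alpha s\gamma y)=\max\{\mu(x),\mu(y)\}$ for all $x,y\in S$, then $\mu$ is a prime fuzzy h-ideal of $S$.
   Context: A $\Gamma$-hemiring is a pair of additive commutative semigroups with zero $S$ and $\Gamma$ with a map $S\times\Gamma\times S\to S$, $(a,\alpha,b)\mapsto a\alpha b$, such that for all $a,b,c\in S$, $\alpha,\beta\in\Gamma$: $(a+b)\alpha c=a\alpha c+b\alpha c$; $a\alpha(b+c)=a\alpha b+a\alpha c$; $a(\alpha+\beta)b=a\alpha b+a\beta b$; $a\alpha(b\beta c)=(a\alpha b)\beta c$; $0\alpha a=0=a\alpha0$; $a0b=0=b0a$. A fuzzy h-ideal of $S$ is a map $\mu:S\to[0,1]$, not identically $0$, such that for all $x,y,a,b,z\in S$, $\gamma\in\Gamma$: $\mu(x+y)\ge\min\{\mu(x),\mu(y)\}$; $\mu(x\gamma y)\ge\mu(x)$ and $\mu(x\gamma y)\ge\mu(y)$; $x+a+z=b+z$ implies $\mu(x)\ge\min\{\mu(a),\mu(b)\}$. For fuzzy subsets $\sigma,\theta$, the h-product is $(\sigma\Gamma_h\theta)(x)=\sup\min\{\sigma(a_1),\sigma(a_2),\theta(b_1),\theta(b_2)\}$,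 the supremum over all $z,a_1,a_2,b_1,b_2\in S$, $\gamma,\delta\in\Gamma$ with $x+a_1\gamma b_1+z=a_2\delta b_2+z$, and $0$ if no such expression exists. Inclusion $\sigma\subseteq\mu$ means $\sigma(x)\le\mu(x)$ for all $x$. A fuzzy h-ideal $\mu$ is prime if $\mu$ is not constant and for any fuzzy h-ideals $\sigma,\theta$ of $S$, $\sigma\Gamma_h\theta\subseteq\mu$ implies $\sigma\subseteq\mu$ or $\theta\subseteq\mu$. $\operatorname{Im}\mu$ is the image of $\mu$. *)

theory Defs
  imports Complex_Main
begin

definition gamma_hemiring :: "('a::comm_monoid_add \<Rightarrow> 'g::comm_monoid_add \<Rightarrow> 'a \<Rightarrow> 'a) \<Rightarrow> bool" where
  "gamma_hemiring m \<longleftrightarrow>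
     (\<forall>a b c \<alpha>. m (a + b) \<alpha> c = m a \<alpha> c + m b \<alpha> c) \<and>
     (\<forall>a b c \<alpha>. m a \<alpha> (b + c) = m a \<alpha> b + m a \<alpha> c) \<and>
     (\<forall>a b \<alpha> \<beta>. m a (\<alpha> + \<beta>) b = m a \<alpha> b + m a \<beta> b) \<and>
     (\<forall>a b c \<alpha> \<beta>. m a \<alpha> (m b \<beta> c) = m (m a \<alpha> b) \<beta> c) \<and>
     (\<forall>a \<alpha>. m 0 \<alpha> a = 0 \<and> m a \<alpha> 0 = 0) \<and>
     (\<forall>a b. m a 0 b = 0 \<and> m b 0 a = 0)"

definition fuzzy_subset :: "('a \<Rightarrow> real) \<Rightarrow> bool" where
  "fuzzy_subset \<mu> \<longleftrightarrow> (\<forall>x. 0 \<le> \<mu> x \<and> \<mu> x \<le> 1)"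

definition fuzzy_h_ideal :: "('a::comm_monoid_add \<Rightarrow> 'g \<Rightarrow> 'a \<Rightarrow> 'a) \<Rightarrow> ('a \<Rightarrow> real) \<Rightarrow> bool" where
  "fuzzy_h_ideal m \<mu> \<longleftrightarrow> fuzzy_subset \<mu> \<and> (\<exists>x. \<mu> x \<noteq> 0) \<and>
     (\<forall>x y. \<mu> (x + y) \<ge> min (\<mu> x) (\<mu> y)) \<and>
     (\<forall>x y \<gamma>. \<mu> (m x \<gamma> y) \<ge> \<mu> x \<and> \<mu> (m x \<gamma> y) \<ge> \<mu> y) \<and>
     (\<forall>x a b z. x + a + z = b + z \<longrightarrow> \<mu> x \<ge> min (\<mu> a) (\<mu> b))"

definition h_product_vals :: "('a::comm_monoid_add \<Rightarrow> 'g \<Rightarrow> 'a \<Rightarrow> 'a) \<Rightarrow> ('a \<Rightarrow> real) \<Rightarrow> ('a \<Rightarrow> real) \<Rightarrow> 'a \<Rightarrow> real set" where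
  "h_product_vals m \<sigma> \<theta> x =
     {min (min (\<sigma> a1) (\<sigma> a2)) (min (\<theta> b1) (\<theta> b2)) | z a1 a2 b1 b2 \<gamma> \<delta>.
         x + m a1 \<gamma> b1 + z = m a2 \<delta> b2 + z}"

definition h_product :: "('a::comm_monoid_add \<Rightarrow> 'g \<Rightarrow> 'a \<Rightarrow> 'a) \<Rightarrow> ('a \<Rightarrow> real) \<Rightarrow> ('a \<Rightarrow> real) \<Rightarrow> 'a \<Rightarrow> real" where
  "h_product m \<sigma> \<theta> x = (if h_product_vals m \<sigma> \<theta> x = {} then 0 else Sup (h_product_vals m \<sigma> \<theta> x))"

definition prime_fuzzy_h_ideal :: "('a::comm_monoid_add \<Rightarrow> 'g \<Rightarrow> 'a \<Rightarrow> 'a) \<Rightarrow> ('a \<Rightarrow> real) \<Rightarrow> bool" where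
  "prime_fuzzy_h_ideal m \<mu> \<longleftrightarrow> fuzzy_h_ideal m \<mu> \<and> \<not> (\<exists>c. \<forall>x. \<mu> x = c) \<and>
     (\<forall>\<sigma> \<theta>. fuzzy_h_ideal m \<sigma> \<and> fuzzy_h_ideal m \<theta> \<and> (\<forall>x. h_product m \<sigma> \<theta> x \<le> \<mu> x)
        \<longrightarrow> (\<forall>x. \<sigma> x \<le> \<mu> x) \<or> (\<forall>x. \<theta> x \<le> \<mu> x))"

end

theory Submission
  imports Defs
begin

lemma gh_addl: "gamma_hemiring m \<Longrightarrow> m (a + b) \<alpha> c = m a \<alpha> c + m b \<alpha> c"
  by (simp add: gamma_hemiring_def)
lemma gh_addr: "gamma_hemiring m \<Longrightarrow> m a \<alpha> (b + c) = m a \<alpha> b + m a \<alpha> c"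
  by (simp add: gamma_hemiring_def)
lemma gh_assoc: "gamma_hemiring m \<Longrightarrow> m a \<alpha> (m b \<beta> c) = m (m a \<alpha> b) \<beta> c"
  by (simp add: gamma_hemiring_def)
lemma gh_z1: "gamma_hemiring m \<Longrightarrow> m 0 \<alpha> a = 0"
  by (simp add: gamma_hemiring_def)
lemma gh_z2: "gamma_hemiring m \<Longrightarrow> m a \<alpha> 0 = 0"
  by (simp add: gamma_hemiring_def)

lemma fh_nn: "fuzzy_h_ideal m \<mu> \<Longrightarrow> 0 \<le> \<mu> x"
  by (simp add: fuzzy_h_ideal_def fuzzy_subset_def)
lemma fh_le1: "fuzzy_h_ideal m \<mu> \<Longrightarrow> \<mu> x \<le> 1"
  by (simp add: fuzzy_h_ideal_def fuzzy_subset_def)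
lemma fh_add: "fuzzy_h_ideal m \<mu> \<Longrightarrow> min (\<mu> x) (\<mu> y) \<le> \<mu> (x + y)"
  by (simp add: fuzzy_h_ideal_def)
lemma fh_ml: "fuzzy_h_ideal m \<mu> \<Longrightarrow> \<mu> x \<le> \<mu> (m x \<gamma> y)"
  by (simp add: fuzzy_h_ideal_def)
lemma fh_mr: "fuzzy_h_ideal m \<mu> \<Longrightarrow> \<mu> y \<le> \<mu> (m x \<gamma> y)"
  by (simp add: fuzzy_h_ideal_def)
lemma fh_h: "fuzzy_h_ideal m \<mu> \<Longrightarrow> x + a + z = b + z \<Longrightarrow> min (\<mu> a) (\<mu> b) \<le> \<mu> x"
  unfolding fuzzy_h_ideal_def by blast

lemma fh_0: "gamma_hemiring m \<Longrightarrow> fuzzy_h_ideal m \<mu> \<Longrightarrow> \<mu> w \<le> \<mu> 0"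
  using fh_ml[of m \<mu> w 0 0] gh_z2[of m w 0] by simp

lemma addf_h:
  assumes "\<And>u v. f (u + v) = f u + f v" "x + a + z = b + z"
  shows "f x + f a + f z = f b + f z"
  using assms by metis

definition hid :: "('a::comm_monoid_add \<Rightarrow> 'g \<Rightarrow> 'a \<Rightarrow> 'a) \<Rightarrow> 'a set \<Rightarrow> bool" where
  "hid m A \<longleftrightarrow> 0 \<in> A \<and> (\<forall>a b. a \<in> A \<longrightarrow> b \<in> A \<longrightarrow> a + b \<in> A) \<and>
     (\<forall>a b \<gamma>. a \<in> A \<longrightarrow> m a \<gamma> b \<in> A \<and> m b \<gamma> a \<in> A) \<and>
     (\<forall>x a b z. x + a + z = b + z \<longrightarrow> a \<in> A \<longrightarrow> b \<in> A \<longrightarrow> x \<in> A)"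

lemma ind_fuzzy:
  assumes "hid m A" "0 < c" "c \<le> 1"
  shows "fuzzy_h_ideal m (\<lambda>a. if a \<in> A then c else 0)"
  using assms unfolding hid_def fuzzy_h_ideal_def fuzzy_subset_def
  by (auto 0 4)

lemma L:
  assumes pr: "prime_fuzzy_h_ideal m \<mu>" and hA: "hid m A" and hB: "hid m B"
    and c: "0 < c" "c \<le> 1"
    and prod: "\<forall>a\<in>A. \<forall>b\<in>B. \<forall>\<gamma>. c \<le> \<mu> (m a \<gamma> b)"
  shows "(\<forall>a\<in>A. c \<le> \<mu> a) \<or> (\<forall>b\<in>B. c \<le> \<mu> b)"
proof -
  define \<sigma> where "\<sigma> = (\<lambda>a. if a \<in> A then c else (0::real))"
  define \<theta> where "\<theta> = (\<lambda>a. if a \<in> B then c else (0::real))"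
  have fm: "fuzzy_h_ideal m \<mu>" using pr by (simp add: prime_fuzzy_h_ideal_def)
  have fs: "fuzzy_h_ideal m \<sigma>" unfolding \<sigma>_def by (rule ind_fuzzy[OF hA c])
  have ft: "fuzzy_h_ideal m \<theta>" unfolding \<theta>_def by (rule ind_fuzzy[OF hB c])
  have hp: "h_product m \<sigma> \<theta> w \<le> \<mu> w" for w
  proof (cases "h_product_vals m \<sigma> \<theta> w = {}")
    case True thus ?thesis by (simp add: h_product_def fh_nn[OF fm])
  next
    case False
    have "Sup (h_product_vals m \<sigma> \<theta> w) \<le> \<mu> w"
    proof (rule cSup_least[OF False])
      fix v assume "v \<in> h_product_vals m \<sigma> \<theta> w"
      then obtain z a1 a2 b1 b2 \<gamma> \<delta> where v: "v = min (min (\<sigma> a1) (\<sigma> a2)) (min (\<theta> b1) (\<theta> b2))"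
        and e: "w + m a1 \<gamma> b1 + z = m a2 \<delta> b2 + z"
        unfolding h_product_vals_def by blast
      show "v \<le> \<mu> w"
      proof (cases "a1 \<in> A \<and> a2 \<in> A \<and> b1 \<in> B \<and> b2 \<in> B")
        case True
        then have "c \<le> \<mu> (m a1 \<gamma> b1)" "c \<le> \<mu> (m a2 \<delta> b2)" using prod by auto
        moreover have "min (\<mu> (m a1 \<gamma> b1)) (\<mu> (m a2 \<delta> b2)) \<le> \<mu> w" by (rule fh_h[OF fm e])
        ultimately show ?thesis using True by (simp add: v \<sigma>_def \<theta>_def)
      next
        case False
        then have "v = 0" using c by (auto simp: v \<sigma>_def \<theta>_def)
        thus ?thesis using fh_nn[OF fm] by simp
      qed
    qed
    thus ?thesis using False by (simp add: h_product_def)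
  qed
  then have "(\<forall>x. \<sigma> x \<le> \<mu> x) \<or> (\<forall>x. \<theta> x \<le> \<mu> x)"
    using pr fs ft unfolding prime_fuzzy_h_ideal_def by blast
  thus ?thesis unfolding \<sigma>_def \<theta>_def by (metis (full_types))
qed

lemma ann_hid:
  assumes gh: "gamma_hemiring m" and fm: "fuzzy_h_ideal m \<mu>" and I0: "I \<le> \<mu> 0"
    and Ar: "\<And>a t \<delta>. a \<in> A \<Longrightarrow> m a \<delta> t \<in> A"
  shows "hid m {b. \<forall>a\<in>A. \<forall>\<gamma>. I \<le> \<mu> (m a \<gamma> b)}"
  unfolding hid_def
proof (intro conjI allI impI)
  show "0 \<in> {b. \<forall>a\<in>A. \<forall>\<gamma>. I \<le> \<mu> (m a \<gamma> b)}" using I0 gh_z2[OF gh] by simp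
next
  fix a b assume "a \<in> {b. \<forall>a\<in>A. \<forall>\<gamma>. I \<le> \<mu> (m a \<gamma> b)}" "b \<in> {b. \<forall>a\<in>A. \<forall>\<gamma>. I \<le> \<mu> (m a \<gamma> b)}"
  then show "a + b \<in> {b. \<forall>a\<in>A. \<forall>\<gamma>. I \<le> \<mu> (m a \<gamma> b)}"
    using fh_add[OF fm] gh_addr[OF gh] by (smt (verit) mem_Collect_eq)
next
  fix a b \<gamma> assume a: "a \<in> {b. \<forall>a\<in>A. \<forall>\<gamma>. I \<le> \<mu> (m a \<gamma> b)}"
  show "m a \<gamma> b \<in> {b. \<forall>a\<in>A. \<forall>\<gamma>. I \<le> \<mu> (m a \<gamma> b)}"
  proof (clarsimp)
    fix a' \<gamma>' assume "a' \<in> A"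
    then have "I \<le> \<mu> (m a' \<gamma>' a)" using a by simp
    also have "\<dots> \<le> \<mu> (m (m a' \<gamma>' a) \<gamma> b)" by (rule fh_ml[OF fm])
    finally show "I \<le> \<mu> (m a' \<gamma>' (m a \<gamma> b))" by (simp add: gh_assoc[OF gh])
  qed
  show "m b \<gamma> a \<in> {b. \<forall>a\<in>A. \<forall>\<gamma>. I \<le> \<mu> (m a \<gamma> b)}"
  proof (clarsimp)
    fix a' \<gamma>' assume "a' \<in> A"
    then have "m a' \<gamma>' b \<in> A" by (rule Ar)
    then have "I \<le> \<mu> (m (m a' \<gamma>' b) \<gamma> a)" using a by simp
    thus "I \<le> \<mu> (m a' \<gamma>' (m b \<gamma> a))" by (simp add: gh_assoc[OF gh])
  qed
next
  fix x a b z assume e: "x + a + z = b + z" and a: "a \<in> {b. \<forall>a\<in>A. \<forall>\<gamma>. I \<le> \<mu> (m a \<gamma> b)}"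
    and b: "b \<in> {b. \<forall>a\<in>A. \<forall>\<gamma>. I \<le> \<mu> (m a \<gamma> b)}"
  show "x \<in> {b. \<forall>a\<in>A. \<forall>\<gamma>. I \<le> \<mu> (m a \<gamma> b)}"
  proof (clarsimp)
    fix a' \<gamma>' assume "a' \<in> A"
    have "m a' \<gamma>' x + m a' \<gamma>' a + m a' \<gamma>' z = m a' \<gamma>' b + m a' \<gamma>' z"
      by (rule addf_h[where f="m a' \<gamma>'", OF gh_addr[OF gh] e])
    then have "min (\<mu> (m a' \<gamma>' a)) (\<mu> (m a' \<gamma>' b)) \<le> \<mu> (m a' \<gamma>' x)" by (rule fh_h[OF fm])
    moreover have "I \<le> \<mu> (m a' \<gamma>' a)" "I \<le> \<mu> (m a' \<gamma>' b)" using a b \<open>a' \<in> A\<close> by auto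
    ultimately show "I \<le> \<mu> (m a' \<gamma>' x)" by linarith
  qed
qed

lemma left_hid:
  assumes gh: "gamma_hemiring m" and fm: "fuzzy_h_ideal m \<mu>" and I0: "I \<le> \<mu> 0"
  shows "hid m {a. \<forall>\<alpha> s \<gamma>. I \<le> \<mu> (m (m a \<alpha> s) \<gamma> y)}"
  unfolding hid_def
proof (intro conjI allI impI)
  show "0 \<in> {a. \<forall>\<alpha> s \<gamma>. I \<le> \<mu> (m (m a \<alpha> s) \<gamma> y)}" using I0 gh_z1[OF gh] by simp
next
  fix a b assume "a \<in> {a. \<forall>\<alpha> s \<gamma>. I \<le> \<mu> (m (m a \<alpha> s) \<gamma> y)}" "b \<in> {a. \<forall>\<alpha> s \<gamma>. I \<le> \<mu> (m (m a \<alpha> s) \<gamma> y)}"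
  then show "a + b \<in> {a. \<forall>\<alpha> s \<gamma>. I \<le> \<mu> (m (m a \<alpha> s) \<gamma> y)}"
    using fh_add[OF fm] gh_addl[OF gh] by (smt (verit) mem_Collect_eq)
next
  fix a b \<gamma> assume a: "a \<in> {a. \<forall>\<alpha> s \<gamma>. I \<le> \<mu> (m (m a \<alpha> s) \<gamma> y)}"
  show "m a \<gamma> b \<in> {a. \<forall>\<alpha> s \<gamma>. I \<le> \<mu> (m (m a \<alpha> s) \<gamma> y)}"
  proof (clarsimp)
    fix \<alpha> s \<gamma>'
    have "I \<le> \<mu> (m (m a \<gamma> (m b \<alpha> s)) \<gamma>' y)" using a by simp
    thus "I \<le> \<mu> (m (m (m a \<gamma> b) \<alpha> s) \<gamma>' y)" by (simp add: gh_assoc[OF gh])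
  qed
  show "m b \<gamma> a \<in> {a. \<forall>\<alpha> s \<gamma>. I \<le> \<mu> (m (m a \<alpha> s) \<gamma> y)}"
  proof (clarsimp)
    fix \<alpha> s \<gamma>'
    have "I \<le> \<mu> (m (m a \<alpha> s) \<gamma>' y)" using a by simp
    also have "\<dots> \<le> \<mu> (m b \<gamma> (m (m a \<alpha> s) \<gamma>' y))" by (rule fh_mr[OF fm])
    finally show "I \<le> \<mu> (m (m (m b \<gamma> a) \<alpha> s) \<gamma>' y)" by (simp add: gh_assoc[OF gh])
  qed
next
  fix x a b z assume e: "x + a + z = b + z" and a: "a \<in> {a. \<forall>\<alpha> s \<gamma>. I \<le> \<mu> (m (m a \<alpha> s) \<gamma> y)}"
    and b: "b \<in> {a. \<forall>\<alpha> s \<gamma>. I \<le> \<mu> (m (m a \<alpha> s) \<gamma> y)}"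
  show "x \<in> {a. \<forall>\<alpha> s \<gamma>. I \<le> \<mu> (m (m a \<alpha> s) \<gamma> y)}"
  proof (clarsimp)
    fix \<alpha> s \<gamma>
    let ?f = "\<lambda>w. m (m w \<alpha> s) \<gamma> y"
    have "?f x + ?f a + ?f z = ?f b + ?f z"
      by (rule addf_h[where f="?f", OF _ e]) (simp add: gh_addl[OF gh])
    then have "min (\<mu> (?f a)) (\<mu> (?f b)) \<le> \<mu> (?f x)" by (rule fh_h[OF fm])
    moreover have "I \<le> \<mu> (?f a)" "I \<le> \<mu> (?f b)" using a b by auto
    ultimately show "I \<le> \<mu> (?f x)" by linarith
  qed
qed

theorem proposition3p16:
  fixes m :: "'a::comm_monoid_add \<Rightarrow> 'g::comm_monoid_add \<Rightarrow> 'a \<Rightarrow> 'a"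
    and \<mu> :: "'a \<Rightarrow> real"
  assumes "gamma_hemiring m"
  shows "(prime_fuzzy_h_ideal m \<mu> \<longrightarrow>
            (\<forall>x y. (INF p \<in> (UNIV :: ('a \<times> 'g \<times> 'g) set).
                       \<mu> (m (m x (fst (snd p)) (fst p)) (snd (snd p)) y)) = max (\<mu> x) (\<mu> y)))
       \<and> ((fuzzy_h_ideal m \<mu> \<and> (\<exists>t. 0 \<le> t \<and> t < 1 \<and> range \<mu> = {1, t}) \<and>
            (\<forall>x y. (INF p \<in> (UNIV :: ('a \<times> 'g \<times> 'g) set).
                       \<mu> (m (m x (fst (snd p)) (fst p)) (snd (snd p)) y)) = max (\<mu> x) (\<mu> y)))
          \<longrightarrow> prime_fuzzy_h_ideal m \<mu>)"
proof (intro conjI impI allI)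
  have gh: "gamma_hemiring m" by fact
  fix x y
  assume pr: "prime_fuzzy_h_ideal m \<mu>"
  have fm: "fuzzy_h_ideal m \<mu>" using pr by (simp add: prime_fuzzy_h_ideal_def)
  define F where "F = (\<lambda>p::('a \<times> 'g \<times> 'g). \<mu> (m (m x (fst (snd p)) (fst p)) (snd (snd p)) y))"
  define I where "I = (INF p \<in> UNIV. F p)"
  have bdd: "bdd_below (range F)" unfolding F_def
    by (rule bdd_belowI[where m=0]) (auto simp: fh_nn[OF fm])
  have low: "I \<le> \<mu> (m (m x \<alpha> s) \<gamma> y)" for \<alpha> s \<gamma>
    using cINF_lower[OF bdd, of "(s, \<alpha>, \<gamma>)"] by (simp add: I_def F_def)
  have ge: "max (\<mu> x) (\<mu> y) \<le> I" unfolding I_def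
  proof (rule cINF_greatest)
    fix p :: "'a \<times> 'g \<times> 'g"
    show "max (\<mu> x) (\<mu> y) \<le> F p" unfolding F_def
      using fh_ml[OF fm, of x "fst (snd p)" "fst p"] fh_ml[OF fm, of "m x (fst (snd p)) (fst p)" "snd (snd p)" y]
        fh_mr[OF fm, of y "m x (fst (snd p)) (fst p)" "snd (snd p)"] by linarith
  qed simp
  have I0: "I \<le> \<mu> 0" using low[of 0 x 0] fh_0[OF gh fm] by (meson order_trans)
  have I1: "I \<le> 1" using low[of 0 x 0] fh_le1[OF fm] by (meson order_trans)
  have "I \<le> max (\<mu> x) (\<mu> y)"
  proof (rule ccontr)
    assume "\<not> ?thesis"
    then have gt: "max (\<mu> x) (\<mu> y) < I" by linarith
    then have Ipos: "0 < I" using fh_nn[OF fm, of x] by linarith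
    define A where "A = {a. \<forall>\<alpha> s \<gamma>. I \<le> \<mu> (m (m a \<alpha> s) \<gamma> y)}"
    have hA: "hid m A" unfolding A_def by (rule left_hid[OF gh fm I0])
    have xA: "x \<in> A" unfolding A_def using low by simp
    have Ar: "\<And>a t \<delta>. a \<in> A \<Longrightarrow> m a \<delta> t \<in> A" using hA unfolding hid_def by blast
    define B where "B = {b. \<forall>a\<in>A. \<forall>\<gamma>. I \<le> \<mu> (m a \<gamma> b)}"
    have hB: "hid m B" unfolding B_def by (rule ann_hid[OF gh fm I0 Ar])
    have "(\<forall>a\<in>A. I \<le> \<mu> a) \<or> (\<forall>b\<in>B. I \<le> \<mu> b)"
      by (rule L[OF pr hA hB Ipos I1]) (auto simp: B_def)
    moreover have "\<not> (\<forall>a\<in>A. I \<le> \<mu> a)" using xA gt by force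
    ultimately have Bp: "\<forall>b\<in>B. I \<le> \<mu> b" by blast
    define D where "D = {b. \<forall>a\<in>(UNIV::'a set). \<forall>\<gamma>. I \<le> \<mu> (m a \<gamma> b)}"
    have hD: "hid m D" unfolding D_def by (rule ann_hid[OF gh fm I0]) simp
    have "m s \<delta> y \<in> B" for s \<delta>
      unfolding B_def
    proof (clarify)
      fix a \<gamma> assume "a \<in> A"
      then have "I \<le> \<mu> (m (m a \<gamma> s) \<delta> y)" unfolding A_def by simp
      thus "I \<le> \<mu> (m a \<gamma> (m s \<delta> y))" by (simp add: gh_assoc[OF gh])
    qed
    then have yD: "y \<in> D" using Bp unfolding D_def by blast
    have "(\<forall>a\<in>D. I \<le> \<mu> a) \<or> (\<forall>b\<in>D. I \<le> \<mu> b)"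
      by (rule L[OF pr hD hD Ipos I1]) (auto simp: D_def)
    then have "I \<le> \<mu> y" using yD by blast
    thus False using gt by linarith
  qed
  then show "(INF p \<in> (UNIV :: ('a \<times> 'g \<times> 'g) set).
                       \<mu> (m (m x (fst (snd p)) (fst p)) (snd (snd p)) y)) = max (\<mu> x) (\<mu> y)"
    using ge unfolding I_def F_def by linarith
next
  have gh: "gamma_hemiring m" by fact
  assume H: "fuzzy_h_ideal m \<mu> \<and> (\<exists>t. 0 \<le> t \<and> t < 1 \<and> range \<mu> = {1, t}) \<and>
            (\<forall>x y. (INF p \<in> (UNIV :: ('a \<times> 'g \<times> 'g) set).
                       \<mu> (m (m x (fst (snd p)) (fst p)) (snd (snd p)) y)) = max (\<mu> x) (\<mu> y))"
  then have fm: "fuzzy_h_ideal m \<mu>" by blast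
  from H obtain t where t: "0 \<le> t" "t < 1" "range \<mu> = {1, t}" by blast
  from H have INFeq: "\<And>x y. (INF p \<in> (UNIV :: ('a \<times> 'g \<times> 'g) set).
                       \<mu> (m (m x (fst (snd p)) (fst p)) (snd (snd p)) y)) = max (\<mu> x) (\<mu> y)" by blast
  have vals: "\<mu> w = 1 \<or> \<mu> w = t" for w using t(3) by (metis insertE rangeI singletonD)
  have nc: "\<not> (\<exists>c. \<forall>x. \<mu> x = c)"
  proof
    assume "\<exists>c. \<forall>x. \<mu> x = c"
    then obtain c where "\<forall>x. \<mu> x = c" by blast
    then have "range \<mu> = {c}" by auto
    thus False using t by auto
  qed
  have main: "(\<forall>x. \<sigma> x \<le> \<mu> x) \<or> (\<forall>x. \<theta> x \<le> \<mu> x)"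
    if fs: "fuzzy_h_ideal m \<sigma>" and ft: "fuzzy_h_ideal m \<theta>" and hp: "\<forall>x. h_product m \<sigma> \<theta> x \<le> \<mu> x"
    for \<sigma> \<theta>
  proof (rule ccontr)
    assume "\<not> ?thesis"
    then obtain a b where a: "\<mu> a < \<sigma> a" and b: "\<mu> b < \<theta> b" by (meson not_le)
    have ma: "\<mu> a = t" using vals[of a] a fh_le1[OF fs, of a] by auto
    have mb: "\<mu> b = t" using vals[of b] b fh_le1[OF ft, of b] by auto
    define G where "G = (\<lambda>p::('a \<times> 'g \<times> 'g). \<mu> (m (m a (fst (snd p)) (fst p)) (snd (snd p)) b))"
    have Gt: "(INF p \<in> UNIV. G p) = t" using INFeq[of a b] ma mb by (simp add: G_def)
    have "\<exists>p. G p = t"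
    proof (rule ccontr)
      assume "\<not> ?thesis"
      then have "\<forall>p. G p = 1" using vals unfolding G_def by blast
      then have "1 \<le> (INF p \<in> UNIV. G p)" by (intro cINF_greatest) auto
      thus False using Gt t by simp
    qed
    then obtain s \<alpha> \<gamma> where sg: "\<mu> (m (m a \<alpha> s) \<gamma> b) = t" unfolding G_def by auto
    let ?w = "m (m a \<alpha> s) \<gamma> b"
    let ?v = "min (min (\<sigma> 0) (\<sigma> (m a \<alpha> s))) (min (\<theta> b) (\<theta> b))"
    have vin: "?v \<in> h_product_vals m \<sigma> \<theta> ?w"
    proof -
      have "?w + m 0 \<gamma> b + 0 = m (m a \<alpha> s) \<gamma> b + 0" by (simp add: gh_z1[OF gh])
      thus ?thesis unfolding h_product_vals_def by blast
    qed
    have bdd: "bdd_above (h_product_vals m \<sigma> \<theta> ?w)"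
    proof (rule bdd_aboveI[where M=1])
      fix v assume "v \<in> h_product_vals m \<sigma> \<theta> ?w"
      then obtain a1 a2 b1 b2 where "v = min (min (\<sigma> a1) (\<sigma> a2)) (min (\<theta> b1) (\<theta> b2))"
        unfolding h_product_vals_def by blast
      thus "v \<le> 1" using fh_le1[OF fs, of a1] by linarith
    qed
    have "?v \<le> h_product m \<sigma> \<theta> ?w"
      using vin cSup_upper[OF vin bdd] by (auto simp: h_product_def)
    moreover have "\<sigma> a \<le> \<sigma> 0" using fh_0[OF gh fs] .
    moreover have "\<sigma> a \<le> \<sigma> (m a \<alpha> s)" by (rule fh_ml[OF fs])
    ultimately have "min (\<sigma> a) (\<theta> b) \<le> \<mu> ?w" using hp[rule_format, of ?w] by linarith
    thus False using a b ma mb sg by linarith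
  qed
  show "prime_fuzzy_h_ideal m \<mu>" unfolding prime_fuzzy_h_ideal_def
    using fm nc main by blast
qed

end
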